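(* Let $G$ be a countable group and $\mu$ a symmetric probability measure on $G$ (i.e. $\mu(g)=\mu(g^{-1})$ for all $g$) whose support generates $G$ as a group. Let $(X_1,X_2,\ldots)$ be a $\mu$-random walk on $G$ and, for $n\ge 1$, let $\mathcal{S}_n$ be the semigroup generated by $\{X_n,X_{n+1},\ldots\}$. Fix $n\ge 1$. If almost surely $X_i^{-1}\in\mathcal{S}_n$ for all $i\ge n$, then $\mathcal{S}_n=G$ almost surely.
   Context: A $\mu$-random walk on $G$ is defined by taking $\zeta_1,\zeta_2,\ldots$ i.i.d. with law $\mu$ and setting $X_n=\zeta_1\zeta_2\cdots\zeta_n$. *)

theory Defs
  imports "HOL-Probability.Probability" "HOL-Algebra.Algebra"
begin

text \<open>The sample space is the space of i.i.d. streams (zeta_1, zeta_2, ...) with law mu,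
  i.e. stream_space (measure_pmf mu); the stream element at index k is zeta_(k+1).\<close>

definition rw_pos :: "('a, 'b) monoid_scheme \<Rightarrow> 'a stream \<Rightarrow> nat \<Rightarrow> 'a" where
  "rw_pos G \<omega> n = foldr (\<lambda>x y. x \<otimes>\<^bsub>G\<^esub> y) (stake n \<omega>) \<one>\<^bsub>G\<^esub>"

inductive_set semigroup_gen :: "('a, 'b) monoid_scheme \<Rightarrow> 'a set \<Rightarrow> 'a set"
  for G :: "('a, 'b) monoid_scheme" and S :: "'a set" where
  base: "x \<in> S \<Longrightarrow> x \<in> semigroup_gen G S"
| mult: "x \<in> semigroup_gen G S \<Longrightarrow> y \<in> semigroup_gen G S \<Longrightarrow> x \<otimes>\<^bsub>G\<^esub> y \<in> semigroup_gen G S"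

definition tail_semigroup :: "('a, 'b) monoid_scheme \<Rightarrow> 'a stream \<Rightarrow> nat \<Rightarrow> 'a set" where
  "tail_semigroup G \<omega> n = semigroup_gen G {rw_pos G \<omega> i | i. i \<ge> n}"

end

theory Submission imports Defs begin

lemma hit0:
  fixes \<mu> :: "'a pmf"
  assumes s: "s \<in> set_pmf \<mu>"
  shows "AE \<omega> in stream_space (measure_pmf \<mu>). \<exists>k. \<omega> !! k = s"
proof -
  let ?M = "stream_space (measure_pmf \<mu>)"
  interpret S: prob_space ?M by (rule prob_space.prob_space_stream_space[OF prob_space_measure_pmf])
  define Z where "Z = {\<omega> \<in> space ?M. \<forall>k. \<omega> !! k \<noteq> s}"
  have Zm: "Z \<in> sets ?M" unfolding Z_def by measurable
  have sp: "space ?M = UNIV" by (simp add: space_stream_space)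
  have eq: "{x\<in>space ?M. t ## x \<in> Z} = (if t = s then {} else Z)" for t
    unfolding Z_def sp by (auto simp: Stream_snth split: nat.splits)
  have "emeasure ?M Z = (\<integral>\<^sup>+t. emeasure ?M {x\<in>space ?M. t ## x \<in> Z} \<partial>measure_pmf \<mu>)"
    by (rule prob_space.emeasure_stream_space[OF prob_space_measure_pmf Zm])
  also have "\<dots> = (\<integral>\<^sup>+t. emeasure ?M Z * indicator (UNIV - {s}) t \<partial>measure_pmf \<mu>)"
    by (intro nn_integral_cong) (simp add: eq)
  also have "\<dots> = emeasure ?M Z * emeasure (measure_pmf \<mu>) (UNIV - {s})"
    by (simp add: nn_integral_cmult_indicator)
  finally have e: "emeasure ?M Z = emeasure ?M Z * emeasure (measure_pmf \<mu>) (UNIV - {s})" .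
  have "measure ?M Z = measure ?M Z * measure (measure_pmf \<mu>) (UNIV - {s})"
    using e by (simp add: S.emeasure_eq_measure measure_pmf.emeasure_eq_measure ennreal_mult'[symmetric])
  moreover have "measure (measure_pmf \<mu>) (UNIV - {s}) = 1 - pmf \<mu> s"
    using measure_pmf.prob_compl[of "{s}" \<mu>] by (simp add: measure_pmf_single Compl_eq_Diff_UNIV)
  moreover have "pmf \<mu> s > 0" using s by (simp add: pmf_positive)
  ultimately have "measure ?M Z * pmf \<mu> s = 0" "pmf \<mu> s > 0"
    by (simp_all add: algebra_simps)
  hence "measure ?M Z = 0" by simp
  hence "Z \<in> null_sets ?M" using Zm by (simp add: S.emeasure_eq_measure null_sets_def)
  then show ?thesis by (rule AE_I') (auto simp: Z_def)
qed

lemma hitn: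
  fixes \<mu> :: "'a pmf"
  assumes s: "s \<in> set_pmf \<mu>"
  shows "AE \<omega> in stream_space (measure_pmf \<mu>). \<exists>k\<ge>n. \<omega> !! k = s"
proof (induction n)
  case 0 then show ?case using hit0[OF s] by simp
next
  case (Suc n)
  have m: "Measurable.pred (stream_space (measure_pmf \<mu>)) (\<lambda>\<omega>. \<exists>k\<ge>Suc n. \<omega> !! k = s)"
    by measurable
  show ?case
    apply (subst prob_space.AE_stream_space[OF prob_space_measure_pmf m])
  proof (rule AE_I2)
    fix x
    show "AE w in stream_space (measure_pmf \<mu>). \<exists>k\<ge>Suc n. (x ## w) !! k = s"
      using Suc.IH
    proof eventually_elim
      case (elim w)
      then obtain k where "k \<ge> n" "w !! k = s" by blast
      then show ?case by (intro exI[of _ "Suc k"]) simp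
    qed
  qed
qed

lemma foldr_assoc:
  assumes "monoid G" "set xs \<subseteq> carrier G" "a \<in> carrier G"
  shows "foldr (\<lambda>x y. x \<otimes>\<^bsub>G\<^esub> y) xs a = foldr (\<lambda>x y. x \<otimes>\<^bsub>G\<^esub> y) xs \<one>\<^bsub>G\<^esub> \<otimes>\<^bsub>G\<^esub> a
     \<and> foldr (\<lambda>x y. x \<otimes>\<^bsub>G\<^esub> y) xs \<one>\<^bsub>G\<^esub> \<in> carrier G"
  using assms(2,3)
proof (induction xs arbitrary: a)
  case Nil then show ?case using assms(1) by (simp add: monoid.l_one monoid.one_closed)
next
  case (Cons x xs)
  let ?F = "foldr (\<lambda>x y. x \<otimes>\<^bsub>G\<^esub> y) xs"
  have x: "x \<in> carrier G" and xs: "set xs \<subseteq> carrier G" using Cons.prems by auto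
  have IH: "?F a = ?F \<one>\<^bsub>G\<^esub> \<otimes>\<^bsub>G\<^esub> a" "?F \<one>\<^bsub>G\<^esub> \<in> carrier G"
    using Cons.IH[OF xs Cons.prems(2)] by auto
  have "foldr (\<lambda>x y. x \<otimes>\<^bsub>G\<^esub> y) (x # xs) a = x \<otimes>\<^bsub>G\<^esub> (?F \<one>\<^bsub>G\<^esub> \<otimes>\<^bsub>G\<^esub> a)"
    using IH(1) by simp
  also have "\<dots> = (x \<otimes>\<^bsub>G\<^esub> ?F \<one>\<^bsub>G\<^esub>) \<otimes>\<^bsub>G\<^esub> a"
    using monoid.m_assoc[OF assms(1) x IH(2) Cons.prems(2)] by simp
  finally show ?case using monoid.m_closed[OF assms(1) x IH(2)] by simp
qed

lemma rw_pos_Suc: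
  assumes "monoid G" "\<forall>k. \<omega> !! k \<in> carrier G"
  shows "rw_pos G \<omega> (Suc i) = rw_pos G \<omega> i \<otimes>\<^bsub>G\<^esub> \<omega> !! i \<and> rw_pos G \<omega> i \<in> carrier G"
proof -
  have st: "set (stake i \<omega>) \<subseteq> carrier G" using assms(2)
    by (auto simp: in_set_conv_nth)
  have "rw_pos G \<omega> (Suc i) = foldr (\<lambda>x y. x \<otimes>\<^bsub>G\<^esub> y) (stake i \<omega>) (\<omega> !! i \<otimes>\<^bsub>G\<^esub> \<one>\<^bsub>G\<^esub>)"
    unfolding rw_pos_def stake_Suc by simp
  also have "\<omega> !! i \<otimes>\<^bsub>G\<^esub> \<one>\<^bsub>G\<^esub> = \<omega> !! i" using assms by (simp add: monoid.r_one)
  finally show ?thesis using foldr_assoc[OF assms(1) st, of "\<omega> !! i"] assms(2)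
    unfolding rw_pos_def by simp
qed

lemma group_part:
  fixes G :: "('a, 'b) monoid_scheme" and \<mu> :: "'a pmf" and n :: nat
  assumes gr: "group G"
    and sup: "set_pmf \<mu> \<subseteq> carrier G"
    and gen: "generate G (set_pmf \<mu>) = carrier G"
    and car: "\<forall>k. \<omega> !! k \<in> carrier G"
    and hit: "\<forall>s\<in>set_pmf \<mu>. \<exists>k\<ge>n. \<omega> !! k = s"
    and inv: "\<forall>i \<ge> n. inv\<^bsub>G\<^esub> (rw_pos G \<omega> i) \<in> tail_semigroup G \<omega> n"
  shows "tail_semigroup G \<omega> n = carrier G"
proof -
  interpret group G by (rule gr)
  define S where "S = tail_semigroup G \<omega> n"
  have X: "rw_pos G \<omega> i \<in> carrier G" for i using rw_pos_Suc[OF monoid_axioms car] by blast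
  have XS: "i \<ge> n \<Longrightarrow> rw_pos G \<omega> i \<in> S" for i
    unfolding S_def tail_semigroup_def by (auto intro: semigroup_gen.base)
  have sub: "S \<subseteq> carrier G"
  proof
    fix x assume "x \<in> S"
    then show "x \<in> carrier G" unfolding S_def tail_semigroup_def
      by (induction rule: semigroup_gen.induct) (auto simp: X)
  qed
  have mS: "x \<in> S \<Longrightarrow> y \<in> S \<Longrightarrow> x \<otimes>\<^bsub>G\<^esub> y \<in> S" for x y
    unfolding S_def tail_semigroup_def by (rule semigroup_gen.mult)
  have iS: "x \<in> S \<Longrightarrow> inv\<^bsub>G\<^esub> x \<in> S" for x
  proof -
    assume "x \<in> S"
    then show "inv\<^bsub>G\<^esub> x \<in> S" unfolding S_def tail_semigroup_def
    proof (induction rule: semigroup_gen.induct)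
      case (base x) then show ?case using inv unfolding tail_semigroup_def by auto
    next
      case (mult x y)
      have "x \<in> carrier G" "y \<in> carrier G" using mult.hyps sub unfolding S_def tail_semigroup_def by auto
      then show ?case using mult.IH by (simp add: inv_mult_group semigroup_gen.mult)
    qed
  qed
  have "rw_pos G \<omega> n \<in> S" by (rule XS) simp
  hence ne: "S \<noteq> {}" by blast
  have sg: "subgroup S G" by (rule subgroupI[OF sub ne iS mS])
  have zS: "k \<ge> n \<Longrightarrow> \<omega> !! k \<in> S" for k
  proof -
    assume k: "k \<ge> n"
    have "rw_pos G \<omega> (Suc k) = rw_pos G \<omega> k \<otimes>\<^bsub>G\<^esub> \<omega> !! k" using rw_pos_Suc[OF monoid_axioms car] by blast
    hence "\<omega> !! k = inv\<^bsub>G\<^esub> (rw_pos G \<omega> k) \<otimes>\<^bsub>G\<^esub> rw_pos G \<omega> (Suc k)"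
      using X car by (simp add: m_assoc[symmetric])
    then show ?thesis using mS[OF iS[OF XS[OF k]] XS[of "Suc k"]] k by simp
  qed
  have sS: "set_pmf \<mu> \<subseteq> S"
  proof
    fix s assume "s \<in> set_pmf \<mu>"
    then obtain k where "k \<ge> n" "\<omega> !! k = s" using hit by blast
    then show "s \<in> S" using zS by blast
  qed
  have "carrier G \<subseteq> S" using generate_subgroup_incl[OF sS sg] gen by simp
  then show ?thesis using sub unfolding S_def by (rule equalityI[rotated])
qed

theorem lemma1:
  fixes G :: "('a, 'b) monoid_scheme" and \<mu> :: "'a pmf" and n :: nat
  assumes "group G"
    and "countable (carrier G)"
    and "set_pmf \<mu> \<subseteq> carrier G"
    and "\<forall>g \<in> carrier G. pmf \<mu> (inv\<^bsub>G\<^esub> g) = pmf \<mu> g"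
    and "generate G (set_pmf \<mu>) = carrier G"
    and "n \<ge> 1"
    and "AE \<omega> in stream_space (measure_pmf \<mu>).
           \<forall>i \<ge> n. inv\<^bsub>G\<^esub> (rw_pos G \<omega> i) \<in> tail_semigroup G \<omega> n"
  shows "AE \<omega> in stream_space (measure_pmf \<mu>). tail_semigroup G \<omega> n = carrier G"
proof -
  have c: "AE \<omega> in stream_space (measure_pmf \<mu>). stream_all (\<lambda>x. x \<in> set_pmf \<mu>) \<omega>"
    by (rule prob_space.AE_stream_all[OF prob_space_measure_pmf]) (auto simp: AE_measure_pmf)
  have h: "AE \<omega> in stream_space (measure_pmf \<mu>). \<forall>s\<in>set_pmf \<mu>. \<exists>k\<ge>n. \<omega> !! k = s"
    by (rule AE_ball_countable') (auto intro: hitn)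
  from c h assms(7) show ?thesis
  proof eventually_elim
    case (elim \<omega>)
    have "\<forall>k. \<omega> !! k \<in> carrier G" using elim(1) assms(3) by (auto simp: stream_all_def)
    then show ?case by (rule group_part[OF assms(1,3,5) _ elim(2,3)])
  qed
qed

end
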